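(* Let $f$ be a $2\pi$-periodic continuous function with modulus of continuity $\omega(\delta)=\omega(\delta,f)$. Suppose there is a function $H(u)\ge 0$ such that \[ \int_u^{\pi} t^{-2}\omega(t)\,dt=\mathcal{O}\big(H(u)\big)\quad (u\to+0) \qquad\text{and}\qquad \int_0^{t}H(u)\,du=\mathcal{O}\big(tH(t)\big)\quad (t\to+0). \] Then, for positive integers $m$, \[ \int_0^{\pi/m}\omega(t)\,dt=\mathcal{O}\big(m^{-2}H(\pi/m)\big). \]
   Context: $\omega(\delta,f)=\sup_{|h|\le\delta}\sup_x|f(x+h)-f(x)|$ is the modulus of continuity of $f$. The notation $u=\mathcal{O}(v)$ means $u\le Cv$ for some positive constant $C$. *)

theory Defs
  imports "HOL-Analysis.Analysis" "HOL-Library.Landau_Symbols"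
begin

definition modulus_of_continuity :: "(real \<Rightarrow> real) \<Rightarrow> real \<Rightarrow> real" where
  "modulus_of_continuity f \<delta> = (SUP p \<in> {(x, h). \<bar>h\<bar> \<le> \<delta>}. \<bar>f (fst p + snd p) - f (fst p)\<bar>)"

end

theory Submission
  imports Defs
begin

lemma periodic_nat:
  assumes periodic: "\<And>x. f (x + 2 * pi) = f x"
  shows "f (y + real n * (2 * pi)) = f y"
proof (induction n)
  case 0 then show ?case by simp
next
  case (Suc n)
  have "y + real (Suc n) * (2 * pi) = (y + real n * (2*pi)) + 2 * pi" by (simp add: algebra_simps)
  then show ?case using Suc periodic[of "y + real n * (2*pi)"] by (simp only:)
qed

lemma periodic_bounded:
  fixes f :: "real \<Rightarrow> real"
  assumes cont: "continuous_on UNIV f"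
    and periodic: "\<And>x. f (x + 2 * pi) = f x"
  obtains M where "\<And>x. \<bar>f x\<bar> \<le> M"
proof -
  have "compact (f ` {0..2*pi})"
    by (rule compact_continuous_image) (auto intro: continuous_on_subset[OF cont])
  then obtain M where M: "\<And>y. y \<in> {0..2*pi} \<Longrightarrow> \<bar>f y\<bar> \<le> M"
    using compact_imp_bounded bounded_iff by (metis image_eqI real_norm_def)
  have "\<bar>f x\<bar> \<le> M" for x
  proof -
    define k where "k = floor (x / (2*pi))"
    define y where "y = x - of_int k * (2*pi)"
    have "of_int k \<le> x / (2*pi)" "x / (2*pi) < of_int k + 1"
      unfolding k_def by linarith+
    then have "of_int k * (2*pi) \<le> x" "x < (of_int k + 1) * (2*pi)"
      by (simp_all add: field_simps)
    then have y: "y \<in> {0..2*pi}" unfolding y_def by (auto simp: algebra_simps)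
    have "f x = f y"
    proof (cases "k \<ge> 0")
      case True
      then obtain n where "k = int n" by (metis nonneg_eq_int)
      then have "x = y + real n * (2*pi)" unfolding y_def by simp
      then show ?thesis using periodic_nat[of f y n, OF periodic] by simp
    next
      case False
      then obtain n where "k = - int n" by (metis neg_int_cases less_le linorder_not_le)
      then have "y = x + real n * (2*pi)" unfolding y_def by simp
      then show ?thesis using periodic_nat[of f x n, OF periodic] by simp
    qed
    then show ?thesis using M y by simp
  qed
  then show ?thesis using that by blast
qed

theorem lemma2p2:
  fixes f H :: "real \<Rightarrow> real"
  assumes cont: "continuous_on UNIV f"
    and periodic: "\<And>x. f (x + 2 * pi) = f x"
    and H_nonneg: "\<And>u. u > 0 \<Longrightarrow> H u \<ge> 0"
    and hyp1: "(\<lambda>u. integral {u..pi} (\<lambda>t. modulus_of_continuity f t / t\<^sup>2)) \<in> O[at_right 0](H)"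
    and H_int: "\<forall>\<^sub>F t in at_right 0. H integrable_on {0..t}"
    and hyp2: "(\<lambda>t. integral {0..t} H) \<in> O[at_right 0](\<lambda>t. t * H t)"
  shows "(\<lambda>m::nat. integral {0..pi / real m} (modulus_of_continuity f))
           \<in> O(\<lambda>m. H (pi / real m) / (real m)\<^sup>2)"
proof -
  define w where "w = modulus_of_continuity f"
  obtain M where M: "\<And>x. \<bar>f x\<bar> \<le> M" using periodic_bounded[OF cont periodic] by blast
  define g where "g = (\<lambda>p::real\<times>real. \<bar>f (fst p + snd p) - f (fst p)\<bar>)"
  have wdef: "w d = (SUP p \<in> {(x, h). \<bar>h\<bar> \<le> d}. g p)" for d
    unfolding w_def g_def modulus_of_continuity_def by simp
  have bdd: "bdd_above (g ` A)" for A
  proof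
    fix y assume "y \<in> g ` A"
    then obtain p where "y = g p" by auto
    then show "y \<le> 2 * M" unfolding g_def using M[of "fst p + snd p"] M[of "fst p"] by auto
  qed
  have w_nonneg: "0 \<le> w d" if "0 \<le> d" for d
  proof -
    have "g (0,0) \<le> w d" unfolding wdef
      by (rule cSUP_upper[OF _ bdd]) (use that in auto)
    then show ?thesis by (simp add: g_def)
  qed
  have w0: "w 0 = 0"
  proof -
    have "w 0 \<le> 0" unfolding wdef
      by (rule cSUP_least) (auto simp: g_def)
    then show ?thesis using w_nonneg[of 0] by simp
  qed
  have w_mono: "w s \<le> w t" if "0 \<le> s" "s \<le> t" for s t
    unfolding wdef
    by (rule cSUP_subset_mono[OF _ bdd]) (use that in \<open>auto intro: exI[of _ 0]\<close>)
  have w_int: "w integrable_on {a..b}" if "0 \<le> a" for a b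
    by (rule integrable_on_mono_on) (use that in \<open>auto simp: mono_on_def intro!: w_mono\<close>)
  define I where "I u = integral {u..pi} (\<lambda>t. w t / t\<^sup>2)" for u
  have key: "w u \<le> 4 * u * I u" if u: "0 < u" "2 * u \<le> pi" for u
  proof -
    let ?G = "\<lambda>t. w t / t\<^sup>2"
    have "(\<lambda>t. inverse (t\<^sup>2) * w t) absolutely_integrable_on {u..pi}"
    proof (rule absolutely_integrable_bounded_measurable_product_real)
      have c: "continuous_on {u..pi} (\<lambda>t. inverse (t\<^sup>2))"
        using u by (intro continuous_intros) auto
      then show "(\<lambda>t. inverse (t\<^sup>2)) \<in> borel_measurable (lebesgue_on {u..pi})"
        by (intro continuous_imp_measurable_on_sets_lebesgue) auto
      show "{u..pi} \<in> sets lebesgue" by simp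
      show "bounded ((\<lambda>t. inverse (t\<^sup>2)) ` {u..pi})"
        using c by (intro compact_imp_bounded compact_continuous_image) auto
      show "w absolutely_integrable_on {u..pi}"
        using w_int[of u pi] u by (intro nonnegative_absolutely_integrable_1) (auto intro!: w_nonneg)
    qed
    then have Gi: "?G integrable_on {u..pi}"
      by (simp add: absolutely_integrable_on_def divide_inverse mult.commute)
    have sub: "{u..2*u} \<subseteq> {u..pi}" using u by auto
    have Gi2: "?G integrable_on {u..2*u}" by (rule integrable_on_subinterval[OF Gi sub])
    have "integral {u..2*u} ?G \<le> I u" unfolding I_def
      by (rule integral_subset_le[OF sub Gi2 Gi]) (use u in \<open>auto intro!: w_nonneg divide_nonneg_nonneg\<close>)
    moreover have "integral {u..2*u} (\<lambda>t. w u / (4 * u\<^sup>2)) \<le> integral {u..2*u} ?G"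
    proof (rule integral_le[OF _ Gi2])
      show "(\<lambda>t. w u / (4 * u\<^sup>2)) integrable_on {u..2*u}" by (rule integrable_const_ivl)
      fix t assume t: "t \<in> {u..2*u}"
      have wt: "w u \<le> w t" "0 \<le> w u" using t u by (auto intro!: w_mono w_nonneg)
      have "t\<^sup>2 \<le> 4 * u\<^sup>2" using t u using mult_mono[of t "2*u" t "2*u"] by (auto simp: power2_eq_square)
      moreover have "0 < t\<^sup>2" using t u by auto
      ultimately have "w u / (4 * u\<^sup>2) \<le> w u / t\<^sup>2"
        using wt u by (intro divide_left_mono) auto
      also have "\<dots> \<le> w t / t\<^sup>2" using wt \<open>0 < t\<^sup>2\<close> by (intro divide_right_mono) auto
      finally show "w u / (4 * u\<^sup>2) \<le> w t / t\<^sup>2" .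
    qed
    moreover have "integral {u..2*u} (\<lambda>t. w u / (4 * u\<^sup>2)) = w u / (4 * u)"
      using u by (simp add: power2_eq_square field_simps)
    ultimately have "w u / (4 * u) \<le> I u" by linarith
    then show ?thesis using u by (simp add: field_simps)
  qed
  from hyp1 obtain c1 where c1: "c1 > 0" and ev1: "\<forall>\<^sub>F u in at_right 0. norm (I u) \<le> c1 * norm (H u)"
    unfolding I_def w_def by (elim landau_o.bigE) auto
  from hyp2 obtain c2 where c2: "c2 > 0" and ev2: "\<forall>\<^sub>F t in at_right 0. norm (integral {0..t} H) \<le> c2 * norm (t * H t)"
    by (elim landau_o.bigE) auto
  have "\<forall>\<^sub>F u in at_right 0. norm (I u) \<le> c1 * norm (H u) \<and> H integrable_on {0..u}
      \<and> norm (integral {0..u} H) \<le> c2 * norm (u * H u)"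
    using ev1 ev2 H_int by eventually_elim auto
  then obtain e0 where e0: "e0 > 0" and P: "\<And>u. 0 < u \<Longrightarrow> u < e0 \<Longrightarrow>
      norm (I u) \<le> c1 * norm (H u) \<and> H integrable_on {0..u} \<and> norm (integral {0..u} H) \<le> c2 * norm (u * H u)"
    unfolding eventually_at_right_field by auto
  define e where "e = min e0 (pi/2)"
  have e: "e > 0" "e \<le> e0" "2 * e \<le> pi" using e0 by (auto simp: e_def)
  have main: "integral {0..d} w \<le> 4 * c1 * c2 * d\<^sup>2 * H d" if d: "0 < d" "d < e" for d
  proof -
    define H0 where "H0 u = (if u = 0 then 0 else H u)" for u
    have Hint: "H integrable_on {0..d}" using P[of d] d e by auto
    have eqH: "integral {0..d} H0 = integral {0..d} H"
      by (rule integral_spike[of "{0}"]) (auto simp: H0_def)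
    have H0int: "H0 integrable_on {0..d}"
      by (rule integrable_spike[OF Hint, of "{0}"]) (auto simp: H0_def)
    have "integral {0..d} w \<le> integral {0..d} (\<lambda>u. 4 * d * c1 * H0 u)"
    proof (rule integral_le[OF w_int])
      show "(\<lambda>u. 4 * d * c1 * H0 u) integrable_on {0..d}" using integrable_on_cmult_left[OF H0int, of "4 * d * c1"] by simp
      fix u assume u: "u \<in> {0..d}"
      show "w u \<le> 4 * d * c1 * H0 u"
      proof (cases "u = 0")
        case True then show ?thesis by (simp add: w0 H0_def)
      next
        case False
        then have u': "0 < u" "u < e0" "2 * u \<le> pi" using u d e by auto
        have Hu: "H u \<ge> 0" using H_nonneg u' by auto
        have "I u \<le> c1 * H u" using P[OF u'(1,2)] Hu by auto
        then have "w u \<le> 4 * u * (c1 * H u)" using key[OF u'(1,3)] u'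
          by (smt (verit) mult_left_mono)
        also have "\<dots> \<le> 4 * d * (c1 * H u)" using u Hu c1 by (intro mult_right_mono) auto
        finally show ?thesis using False by (simp add: H0_def)
      qed
    qed simp
    also have "\<dots> = 4 * d * c1 * integral {0..d} H" using eqH by simp
    also have "\<dots> \<le> 4 * d * c1 * (c2 * (d * H d))"
    proof -
      have "integral {0..d} H \<le> c2 * norm (d * H d)" using P[of d] d e by auto
      also have "norm (d * H d) = d * H d" using d H_nonneg[of d] by simp
      finally show ?thesis using d c1 by (intro mult_left_mono) auto
    qed
    finally show ?thesis by (simp add: power2_eq_square algebra_simps)
  qed
  show ?thesis
  proof (rule landau_o.bigI[where c = "4 * c1 * c2 * pi\<^sup>2"])
    show "0 < 4 * c1 * c2 * pi\<^sup>2" using c1 c2 by simp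
    obtain N :: nat where N: "pi / e < real N" using reals_Archimedean2 by blast
    show "\<forall>\<^sub>F m in sequentially. norm (integral {0..pi / real m} (modulus_of_continuity f))
        \<le> 4 * c1 * c2 * pi\<^sup>2 * norm (H (pi / real m) / (real m)\<^sup>2)"
      unfolding eventually_sequentially
    proof (intro exI allI impI)
      fix m assume m: "Suc N \<le> m"
      have mpos: "real m > 0" using m by simp
      have "pi / e < real m" using N m by simp
      then have "pi < real m * e" using e by (simp add: field_simps)
      then have dl: "pi / real m < e" using mpos by (simp add: field_simps)
      have dp: "0 < pi / real m" using mpos by simp
      have Hd: "H (pi / real m) \<ge> 0" using H_nonneg dp by auto
      have nn: "0 \<le> integral {0..pi / real m} w"
        by (rule integral_nonneg[OF w_int]) (auto intro!: w_nonneg)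
      have "norm (integral {0..pi / real m} w) = integral {0..pi / real m} w" using nn by simp
      also have "\<dots> \<le> 4 * c1 * c2 * (pi / real m)\<^sup>2 * H (pi / real m)" by (rule main[OF dp dl])
      also have "\<dots> = 4 * c1 * c2 * pi\<^sup>2 * norm (H (pi / real m) / (real m)\<^sup>2)"
        using Hd mpos by (simp add: power_divide)
      finally show "norm (integral {0..pi / real m} (modulus_of_continuity f))
        \<le> 4 * c1 * c2 * pi\<^sup>2 * norm (H (pi / real m) / (real m)\<^sup>2)" by (simp add: w_def)
    qed
  qed
qed

end
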